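(* Let $\mathcal L=(\Sigma,X)$ be a language and $\Lambda$ a fuzzy theory in $\mathcal L$. Let $\mathscr F_\Lambda$ be a left adjoint of $\mathscr U_\Lambda:\mathbf{Mod}(\Lambda)\to\mathbf{Fuz}_H$ with unit $\eta$, let $\nabla(X)=(X,c_\bot)$ (constant membership $\bot$), and let $\iota_{nat}:X\to$ (underlying set of $\mathscr F_\Lambda(\nabla(X))$) be the underlying function of $\eta_{\nabla(X)}$. Then for every formula $\phi$ of $\mathcal L$: $\mathscr F_\Lambda(\nabla(X))\vDash_{\iota_{nat}}\phi$ if and only if $\vdash_\Lambda\phi$.
   Context: $H$ is a frame with bottom $\bot$. An $H$-fuzzy set is a pair $(A,\mu_A)$ of a set $A$ and a function $\mu_A:A\to H$; an arrow $f:(A,\mu_A)\to(B,\mu_B)$ is a function with $\mu_A(x)\le\mu_B(f(x))$; they form $\mathbf{Fuz}_H$. For $n\ge1$, $(A,\mu_A)^n=(A^n,\mu)$ with $\mu(a_1,\dots,a_n)=\bigwedge_i\mu_A(a_i)$. A signature $\Sigma=(O,\mathrm{ar},C)$ consists of a set $O$ of operation symbols with arity $\mathrm{ar}:O\to\{1,2,3,\dots\}$ and a set $C$ of constant symbols. A language is a pair $\mathcal L=(\Sigma,X)$ with $X$ a set of variables. $\mathrm{Terms}(\mathcal L)$ is the smallest set containing $X\sqcup C$ and containing $f(t_1,\dots,t_{\mathrm{ar}(f)})$ whenever $f\in O$ and all $t_i\in\mathrm{Terms}(\mathcal L)$. A formula is either an equation $s\equiv t$ ($s,t$ terms) or a membership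 proposition $\mathsf E_l(t)$ with $l\in H$ and $t$ a term. A sequent $\Gamma\vdash\psi$ is a pair of a (possibly infinite) set $\Gamma$ of formulas and a formula $\psi$; $\vdash\psi$ means $\emptyset\vdash\psi$. A fuzzy theory in $\mathcal L$ is a set of sequents. For $\sigma:X\to\mathrm{Terms}(\mathcal L)$, $t[\sigma]$ is simultaneous substitution, extended to formulas by $(s\equiv t)[\sigma]=(s[\sigma]\equiv t[\sigma])$, $\mathsf E_l(t)[\sigma]=\mathsf E_l(t[\sigma])$, and to sets of formulas elementwise. The rules of the fuzzy sequent calculus are (for all sets of formulas $\Gamma,\Delta,\Phi$, formulas $\phi,\psi$, terms, $l,l'\in H$): (A) $\Gamma\vdash\phi$ if $\phi\in\Gamma$; (Weak) from $\Gamma\vdash\phi$ infer $\Gamma\cup\Delta\vdash\phi$; (Cut) from $\Gamma\vdash\phi$ for all $\phi\in\Phi$ and $\Phi\vdash\psi$ infer $\Gamma\vdash\psi$; (Refl) $\Gamma\vdash s\equiv s$; (Sym) from $\Gamma\vdash s\equiv t$ infer $\Gamma\vdash t\equiv s$; (Trans) from $\Gamma\vdash s\equiv t$ and $\Gamma\vdash t\equiv u$ infer $\Gamma\vdash s\equiv u$; (Sub) from $\Gamma\vdash\psi$ infer $\Gamma[\sigma]\vdash\psi[\sigma]$ for any $\sigma:X\to\mathrm{Terms}(\mathcal L)$; (Cong) for $f\in O$ with $n=\mathrm{ar}(f)$, from $\Gamma\vdash t_i\equiv s_i$ ($i=1,\dots,n$) infer $\Gamma\vdash f(t_1,\dots,t_n)\equiv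 f(s_1,\dots,s_n)$; (Inf) $\Gamma\vdash\mathsf E_\bot(t)$; (Mon) from $\Gamma\vdash\mathsf E_l(t)$ infer $\Gamma\vdash\mathsf E_{l\wedge l'}(t)$; (Exp) for $f\in O$ with $n=\mathrm{ar}(f)$, from $\Gamma\vdash\mathsf E_{l_i}(t_i)$ ($i=1,\dots,n$) infer $\Gamma\vdash\mathsf E_{l_1\wedge\dots\wedge l_n}(f(t_1,\dots,t_n))$; (Sup) for $S\subseteq H$, from $\Gamma\vdash\mathsf E_l(t)$ for all $l\in S$ infer $\Gamma\vdash\mathsf E_{\sup S}(t)$; (Fun) from $\Gamma\vdash t\equiv s$ and $\Gamma\vdash\mathsf E_l(t)$ infer $\Gamma\vdash\mathsf E_l(s)$. The deductive closure $\Lambda^{\vdash}$ of a theory $\Lambda$ is the smallest set of sequents containing $\Lambda$ and closed under all these rules; $\vdash_\Lambda\phi$ means $(\emptyset\vdash\phi)\in\Lambda^{\vdash}$. A $\Sigma$-algebra $\mathcal A=((A,\mu_A),\Sigma^{\mathcal A})$ is an $H$-fuzzy set $(A,\mu_A)$ together with, for each $f\in O$, an arrow $f^{\mathcal A}:(A,\mu_A)^{\mathrm{ar}(f)}\to(A,\mu_A)$ of $\mathbf{Fuz}_H$ and, for each $c\in C$, an element $c^{\mathcal A}\in A$. A morphism of $\Sigma$-algebras is an arrow of $\mathbf{Fuz}_H$ between the carriers preserving all constants and commuting with all operations. An assignment is a function $\iota:X\to A$; evaluation: $x^{\mathcal A,\iota}=\iota(x)$, $c^{\mathcal A,\iota}=c^{\mathcal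 A}$, $f(t_1,\dots,t_n)^{\mathcal A,\iota}=f^{\mathcal A}(t_1^{\mathcal A,\iota},\dots,t_n^{\mathcal A,\iota})$. $\mathcal A\vDash_\iota s\equiv t$ iff $s^{\mathcal A,\iota}=t^{\mathcal A,\iota}$; $\mathcal A\vDash_\iota\mathsf E_l(t)$ iff $l\le\mu_A(t^{\mathcal A,\iota})$. $\mathcal A$ satisfies $\Gamma\vdash\psi$ if for every assignment $\iota$ with $\mathcal A\vDash_\iota\phi$ for all $\phi\in\Gamma$ one has $\mathcal A\vDash_\iota\psi$. $\mathcal A$ is a model of a theory $\Lambda$ if it satisfies every sequent of $\Lambda$. $\mathbf{Mod}(\Lambda)$ is the full subcategory of the category of $\Sigma$-algebras on the models of $\Lambda$, and $\mathscr U_\Lambda:\mathbf{Mod}(\Lambda)\to\mathbf{Fuz}_H$ is the forgetful functor to carriers. *)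

theory Defs
  imports Main
begin

datatype ('o,'c,'x) trm = Var 'x | Cst 'c | App 'o "('o,'c,'x) trm list"

datatype ('o,'c,'x,'h) fml = Eqn "('o,'c,'x) trm" "('o,'c,'x) trm"
                           | Mem 'h "('o,'c,'x) trm"

inductive_set terms :: "'o set \<Rightarrow> ('o \<Rightarrow> nat) \<Rightarrow> 'c set \<Rightarrow> 'x set \<Rightarrow> ('o,'c,'x) trm set"
  for Ops ar Cs X where
  var: "x \<in> X \<Longrightarrow> Var x \<in> terms Ops ar Cs X"
| cst: "c \<in> Cs \<Longrightarrow> Cst c \<in> terms Ops ar Cs X"
| app: "f \<in> Ops \<Longrightarrow> length ts = ar f \<Longrightarrow> (\<forall>t\<in>set ts. t \<in> terms Ops ar Cs X)
        \<Longrightarrow> App f ts \<in> terms Ops ar Cs X"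

definition fmls :: "'o set \<Rightarrow> ('o \<Rightarrow> nat) \<Rightarrow> 'c set \<Rightarrow> 'x set \<Rightarrow> ('o,'c,'x,'h) fml set" where
  "fmls Ops ar Cs X =
     {Eqn s t | s t. s \<in> terms Ops ar Cs X \<and> t \<in> terms Ops ar Cs X}
     \<union> {Mem l t | l t. t \<in> terms Ops ar Cs X}"

definition is_theory :: "'o set \<Rightarrow> ('o \<Rightarrow> nat) \<Rightarrow> 'c set \<Rightarrow> 'x set
     \<Rightarrow> (('o,'c,'x,'h) fml set \<times> ('o,'c,'x,'h) fml) set \<Rightarrow> bool" where
  "is_theory Ops ar Cs X \<Lambda> \<longleftrightarrow>
     (\<forall>(\<Gamma>,\<psi>)\<in>\<Lambda>. \<Gamma> \<subseteq> fmls Ops ar Cs X \<and> \<psi> \<in> fmls Ops ar Cs X)"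

primrec tsubst :: "('x \<Rightarrow> ('o,'c,'x) trm) \<Rightarrow> ('o,'c,'x) trm \<Rightarrow> ('o,'c,'x) trm" where
  "tsubst \<sigma> (Var x) = \<sigma> x"
| "tsubst \<sigma> (Cst c) = Cst c"
| "tsubst \<sigma> (App f ts) = App f (map (tsubst \<sigma>) ts)"

fun fsubst :: "('x \<Rightarrow> ('o,'c,'x) trm) \<Rightarrow> ('o,'c,'x,'h) fml \<Rightarrow> ('o,'c,'x,'h) fml" where
  "fsubst \<sigma> (Eqn s t) = Eqn (tsubst \<sigma> s) (tsubst \<sigma> t)"
| "fsubst \<sigma> (Mem l t) = Mem l (tsubst \<sigma> t)"

inductive_set deriv :: "'o set \<Rightarrow> ('o \<Rightarrow> nat) \<Rightarrow> 'c set \<Rightarrow> 'x set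
    \<Rightarrow> (('o,'c,'x,'h::complete_lattice) fml set \<times> ('o,'c,'x,'h) fml) set
    \<Rightarrow> (('o,'c,'x,'h) fml set \<times> ('o,'c,'x,'h) fml) set"
  for Ops ar Cs X \<Lambda> where
  Ax: "s \<in> \<Lambda> \<Longrightarrow> s \<in> deriv Ops ar Cs X \<Lambda>"
| A: "\<Gamma> \<subseteq> fmls Ops ar Cs X \<Longrightarrow> \<phi> \<in> \<Gamma> \<Longrightarrow> (\<Gamma>, \<phi>) \<in> deriv Ops ar Cs X \<Lambda>"
| Weak: "(\<Gamma>, \<phi>) \<in> deriv Ops ar Cs X \<Lambda> \<Longrightarrow> \<Delta> \<subseteq> fmls Ops ar Cs X
         \<Longrightarrow> (\<Gamma> \<union> \<Delta>, \<phi>) \<in> deriv Ops ar Cs X \<Lambda>"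
| Cut: "\<Gamma> \<subseteq> fmls Ops ar Cs X \<Longrightarrow> (\<forall>\<phi>\<in>\<Phi>. (\<Gamma>, \<phi>) \<in> deriv Ops ar Cs X \<Lambda>)
        \<Longrightarrow> (\<Phi>, \<psi>) \<in> deriv Ops ar Cs X \<Lambda> \<Longrightarrow> (\<Gamma>, \<psi>) \<in> deriv Ops ar Cs X \<Lambda>"
| Refl: "\<Gamma> \<subseteq> fmls Ops ar Cs X \<Longrightarrow> s \<in> terms Ops ar Cs X
         \<Longrightarrow> (\<Gamma>, Eqn s s) \<in> deriv Ops ar Cs X \<Lambda>"
| Sym: "(\<Gamma>, Eqn s t) \<in> deriv Ops ar Cs X \<Lambda> \<Longrightarrow> (\<Gamma>, Eqn t s) \<in> deriv Ops ar Cs X \<Lambda>"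
| Trans: "(\<Gamma>, Eqn s t) \<in> deriv Ops ar Cs X \<Lambda> \<Longrightarrow> (\<Gamma>, Eqn t u) \<in> deriv Ops ar Cs X \<Lambda>
          \<Longrightarrow> (\<Gamma>, Eqn s u) \<in> deriv Ops ar Cs X \<Lambda>"
| Sub: "(\<Gamma>, \<psi>) \<in> deriv Ops ar Cs X \<Lambda> \<Longrightarrow> (\<forall>x\<in>X. \<sigma> x \<in> terms Ops ar Cs X)
        \<Longrightarrow> (fsubst \<sigma> ` \<Gamma>, fsubst \<sigma> \<psi>) \<in> deriv Ops ar Cs X \<Lambda>"
| Cong: "f \<in> Ops \<Longrightarrow> length ts = ar f \<Longrightarrow> length ss = ar f
         \<Longrightarrow> (\<forall>i<ar f. (\<Gamma>, Eqn (ts ! i) (ss ! i)) \<in> deriv Ops ar Cs X \<Lambda>)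
         \<Longrightarrow> (\<Gamma>, Eqn (App f ts) (App f ss)) \<in> deriv Ops ar Cs X \<Lambda>"
| Inf: "\<Gamma> \<subseteq> fmls Ops ar Cs X \<Longrightarrow> t \<in> terms Ops ar Cs X
        \<Longrightarrow> (\<Gamma>, Mem bot t) \<in> deriv Ops ar Cs X \<Lambda>"
| Mon: "(\<Gamma>, Mem l t) \<in> deriv Ops ar Cs X \<Lambda> \<Longrightarrow> (\<Gamma>, Mem (inf l l') t) \<in> deriv Ops ar Cs X \<Lambda>"
| Exp: "f \<in> Ops \<Longrightarrow> length ts = ar f \<Longrightarrow> length ls = ar f
        \<Longrightarrow> (\<forall>i<ar f. (\<Gamma>, Mem (ls ! i) (ts ! i)) \<in> deriv Ops ar Cs X \<Lambda>)
        \<Longrightarrow> (\<Gamma>, Mem (Inf (set ls)) (App f ts)) \<in> deriv Ops ar Cs X \<Lambda>"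
| Sup: "\<Gamma> \<subseteq> fmls Ops ar Cs X \<Longrightarrow> t \<in> terms Ops ar Cs X
        \<Longrightarrow> (\<forall>l\<in>S. (\<Gamma>, Mem l t) \<in> deriv Ops ar Cs X \<Lambda>)
        \<Longrightarrow> (\<Gamma>, Mem (Sup S) t) \<in> deriv Ops ar Cs X \<Lambda>"
| Fun: "(\<Gamma>, Eqn t s) \<in> deriv Ops ar Cs X \<Lambda> \<Longrightarrow> (\<Gamma>, Mem l t) \<in> deriv Ops ar Cs X \<Lambda>
        \<Longrightarrow> (\<Gamma>, Mem l s) \<in> deriv Ops ar Cs X \<Lambda>"

definition provable :: "'o set \<Rightarrow> ('o \<Rightarrow> nat) \<Rightarrow> 'c set \<Rightarrow> 'x set
    \<Rightarrow> (('o,'c,'x,'h::complete_lattice) fml set \<times> ('o,'c,'x,'h) fml) set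
    \<Rightarrow> ('o,'c,'x,'h) fml \<Rightarrow> bool" where
  "provable Ops ar Cs X \<Lambda> \<phi> \<longleftrightarrow> ({}, \<phi>) \<in> deriv Ops ar Cs X \<Lambda>"

definition is_frame :: "'h::complete_lattice itself \<Rightarrow> bool" where
  "is_frame _ \<longleftrightarrow> (\<forall>(a::'h) S. inf a (Sup S) = Sup ((inf a) ` S))"

record ('a,'h,'o,'c) falg =
  carrier :: "'a set"
  mem :: "'a \<Rightarrow> 'h"
  opr :: "'o \<Rightarrow> 'a list \<Rightarrow> 'a"
  cst :: "'c \<Rightarrow> 'a"

text \<open>Each operation is an arrow (A,mu)^n -> (A,mu) of Fuz_H (on the carrier),
  where (A,mu)^n has membership the meet of the memberships (n >= 1).\<close>
definition is_alg :: "'o set \<Rightarrow> ('o \<Rightarrow> nat) \<Rightarrow> 'c set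
    \<Rightarrow> ('a,'h::complete_lattice,'o,'c) falg \<Rightarrow> bool" where
  "is_alg Ops ar Cs A \<longleftrightarrow>
     (\<forall>f\<in>Ops. \<forall>as. length as = ar f \<and> set as \<subseteq> carrier A \<longrightarrow>
         opr A f as \<in> carrier A \<and> Inf (mem A ` set as) \<le> mem A (opr A f as))
   \<and> (\<forall>c\<in>Cs. cst A c \<in> carrier A)"

primrec eval :: "('a,'h,'o,'c) falg \<Rightarrow> ('x \<Rightarrow> 'a) \<Rightarrow> ('o,'c,'x) trm \<Rightarrow> 'a" where
  "eval A \<iota> (Var x) = \<iota> x"
| "eval A \<iota> (Cst c) = cst A c"
| "eval A \<iota> (App f ts) = opr A f (map (eval A \<iota>) ts)"

fun sat :: "('a,'h::complete_lattice,'o,'c) falg \<Rightarrow> ('x \<Rightarrow> 'a) \<Rightarrow> ('o,'c,'x,'h) fml \<Rightarrow> bool" where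
  "sat A \<iota> (Eqn s t) \<longleftrightarrow> eval A \<iota> s = eval A \<iota> t"
| "sat A \<iota> (Mem l t) \<longleftrightarrow> l \<le> mem A (eval A \<iota> t)"

definition sat_seq :: "'x set \<Rightarrow> ('a,'h::complete_lattice,'o,'c) falg
    \<Rightarrow> ('o,'c,'x,'h) fml set \<Rightarrow> ('o,'c,'x,'h) fml \<Rightarrow> bool" where
  "sat_seq X A \<Gamma> \<psi> \<longleftrightarrow>
     (\<forall>\<iota>. \<iota> ` X \<subseteq> carrier A \<longrightarrow> (\<forall>\<phi>\<in>\<Gamma>. sat A \<iota> \<phi>) \<longrightarrow> sat A \<iota> \<psi>)"

definition is_model :: "'o set \<Rightarrow> ('o \<Rightarrow> nat) \<Rightarrow> 'c set \<Rightarrow> 'x set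
    \<Rightarrow> (('o,'c,'x,'h::complete_lattice) fml set \<times> ('o,'c,'x,'h) fml) set
    \<Rightarrow> ('a,'h,'o,'c) falg \<Rightarrow> bool" where
  "is_model Ops ar Cs X \<Lambda> A \<longleftrightarrow>
     is_alg Ops ar Cs A \<and> (\<forall>(\<Gamma>,\<psi>)\<in>\<Lambda>. sat_seq X A \<Gamma> \<psi>)"

definition alg_hom :: "'o set \<Rightarrow> ('o \<Rightarrow> nat) \<Rightarrow> 'c set
    \<Rightarrow> ('a,'h::complete_lattice,'o,'c) falg \<Rightarrow> ('b,'h,'o,'c) falg \<Rightarrow> ('a \<Rightarrow> 'b) \<Rightarrow> bool" where
  "alg_hom Ops ar Cs A B h \<longleftrightarrow>
     (\<forall>a\<in>carrier A. h a \<in> carrier B \<and> mem A a \<le> mem B (h a))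
   \<and> (\<forall>c\<in>Cs. h (cst A c) = cst B c)
   \<and> (\<forall>f\<in>Ops. \<forall>as. length as = ar f \<and> set as \<subseteq> carrier A \<longrightarrow>
         h (opr A f as) = opr B f (map h as))"

text \<open>Fuz_H arrow from nabla(X) = (X, const bot) into the carrier of a model.\<close>
definition nabla_arrow :: "'x set \<Rightarrow> ('b,'h::complete_lattice,'o,'c) falg \<Rightarrow> ('x \<Rightarrow> 'b) \<Rightarrow> bool" where
  "nabla_arrow X B g \<longleftrightarrow> (\<forall>x\<in>X. g x \<in> carrier B \<and> (bot::'h) \<le> mem B (g x))"

text \<open>(F, eta) is a universal arrow from nabla(X) to the forgetful functor U_Lambda,
  i.e. the value at nabla(X) of a left adjoint of U_Lambda together with the component
  of its unit, where the universal property is tested against all models of Lambda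
  whose carrier lives in the type 'b.\<close>
definition universal_arrow :: "'o set \<Rightarrow> ('o \<Rightarrow> nat) \<Rightarrow> 'c set \<Rightarrow> 'x set
    \<Rightarrow> (('o,'c,'x,'h::complete_lattice) fml set \<times> ('o,'c,'x,'h) fml) set
    \<Rightarrow> ('a,'h,'o,'c) falg \<Rightarrow> ('x \<Rightarrow> 'a) \<Rightarrow> 'b itself \<Rightarrow> bool" where
  "universal_arrow Ops ar Cs X \<Lambda> F \<eta> _ \<longleftrightarrow>
     is_model Ops ar Cs X \<Lambda> F \<and> nabla_arrow X F \<eta> \<and>
     (\<forall>(B::('b,'h,'o,'c) falg) g. is_model Ops ar Cs X \<Lambda> B \<and> nabla_arrow X B g \<longrightarrow>
        (\<exists>h. alg_hom Ops ar Cs F B h \<and> (\<forall>x\<in>X. h (\<eta> x) = g x)) \<and>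
        (\<forall>h h'. alg_hom Ops ar Cs F B h \<and> (\<forall>x\<in>X. h (\<eta> x) = g x) \<and>
                alg_hom Ops ar Cs F B h' \<and> (\<forall>x\<in>X. h' (\<eta> x) = g x)
                \<longrightarrow> (\<forall>a\<in>carrier F. h a = h' a)))"

end

theory Submission
  imports Defs
begin

lemma Eqn_fmls[simp]: "Eqn s t \<in> fmls Ops ar Cs X \<longleftrightarrow> s \<in> terms Ops ar Cs X \<and> t \<in> terms Ops ar Cs X"
  by (auto simp: fmls_def)
lemma Mem_fmls[simp]: "Mem l t \<in> fmls Ops ar Cs X \<longleftrightarrow> t \<in> terms Ops ar Cs X"
  by (auto simp: fmls_def)

lemma tsubst_terms: "t \<in> terms Ops ar Cs X \<Longrightarrow> \<forall>x\<in>X. \<sigma> x \<in> terms Ops ar Cs X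
  \<Longrightarrow> tsubst \<sigma> t \<in> terms Ops ar Cs X"
  by (induction rule: terms.induct) (auto intro!: terms.intros)

lemma fsubst_fmls: "\<phi> \<in> fmls Ops ar Cs X \<Longrightarrow> \<forall>x\<in>X. \<sigma> x \<in> terms Ops ar Cs X
  \<Longrightarrow> fsubst \<sigma> \<phi> \<in> fmls Ops ar Cs X"
  by (cases \<phi>) (auto intro: tsubst_terms)

lemma app_terms: "f \<in> Ops \<Longrightarrow> length ts = ar f \<Longrightarrow> (\<forall>i<ar f. ts ! i \<in> terms Ops ar Cs X)
  \<Longrightarrow> App f ts \<in> terms Ops ar Cs X"
  by (rule terms.app) (auto simp: in_set_conv_nth)

lemma deriv_wf:
  assumes thy: "is_theory Ops ar Cs X \<Lambda>" and arity: "\<forall>f\<in>Ops. 0 < ar f"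
  shows "(\<Gamma>, \<phi>) \<in> deriv Ops ar Cs X \<Lambda> \<Longrightarrow> \<Gamma> \<subseteq> fmls Ops ar Cs X \<and> \<phi> \<in> fmls Ops ar Cs X"
proof (induction rule: deriv.induct[split_format (complete)])
  case (Ax \<Gamma> \<phi>)
  then show ?case using thy unfolding is_theory_def by auto
next
  case (Sub \<Gamma> \<psi> \<sigma>)
  then show ?case using fsubst_fmls by blast
next
  case (Cong f ts ss \<Gamma>)
  then have "0 < ar f" using arity by auto
  then have "\<Gamma> \<subseteq> fmls Ops ar Cs X" using Cong.IH by blast
  moreover have "App f ts \<in> terms Ops ar Cs X" using Cong.IH Cong.hyps by (intro app_terms) auto
  moreover have "App f ss \<in> terms Ops ar Cs X" using Cong.IH Cong.hyps by (intro app_terms) auto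
  ultimately show ?case by simp
next
  case (Exp f ts ls \<Gamma>)
  then have "0 < ar f" using arity by auto
  then have "\<Gamma> \<subseteq> fmls Ops ar Cs X" using Exp.IH by blast
  moreover have "App f ts \<in> terms Ops ar Cs X" using Exp.IH Exp.hyps by (intro app_terms) auto
  ultimately show ?case by simp
next
  case (A \<Gamma> \<phi>) then show ?case by blast
next
  case (Weak \<Gamma> \<phi> \<Delta>) then show ?case by blast
next
  case (Cut \<Gamma> \<Phi> \<psi>) then show ?case by blast
next
  case (Refl \<Gamma> s) then show ?case by simp
next
  case (Sym \<Gamma> s t) then show ?case by simp
next
  case (Trans \<Gamma> s t u) then show ?case by simp
next
  case (Inf \<Gamma> t) then show ?case by simp
next
  case (Sup \<Gamma> t S) then show ?case by simp
next
  case (Mon \<Gamma> l t l') then show ?case by simp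
next
  case (Fun \<Gamma> t s l) then show ?case by simp
qed

lemma eval_carrier0:
  assumes alg: "is_alg Ops ar Cs A" and i: "\<iota> ` X \<subseteq> carrier A"
  shows "t \<in> terms Ops ar Cs X \<Longrightarrow> eval A \<iota> t \<in> carrier A"
proof (induction rule: terms.induct)
  case (var x)
  then show ?case using i by auto
next
  case (cst c)
  then show ?case using alg unfolding is_alg_def by auto
next
  case (app f ts)
  have "set (map (eval A \<iota>) ts) \<subseteq> carrier A" using app.IH by auto
  moreover have "length (map (eval A \<iota>) ts) = ar f" using app.hyps(2) by simp
  ultimately show ?case using alg app.hyps(1) unfolding is_alg_def by simp
qed
lemma eval_carrier: "is_alg Ops ar Cs A \<Longrightarrow> \<iota> ` X \<subseteq> carrier A \<Longrightarrow> t \<in> terms Ops ar Cs X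
  \<Longrightarrow> eval A \<iota> t \<in> carrier A" using eval_carrier0 by metis

lemma eval_tsubst: "eval A \<iota> (tsubst \<sigma> t) = eval A (eval A \<iota> \<circ> \<sigma>) t"
  by (induction t) (simp_all add: comp_def cong: map_cong)

lemma sat_fsubst: "sat A \<iota> (fsubst \<sigma> \<phi>) = sat A (eval A \<iota> \<circ> \<sigma>) \<phi>"
  by (cases \<phi>) (auto simp: eval_tsubst)

lemma sat_seqD: "sat_seq X A \<Gamma> \<psi> \<Longrightarrow> \<iota> ` X \<subseteq> carrier A \<Longrightarrow> \<forall>\<phi>\<in>\<Gamma>. sat A \<iota> \<phi> \<Longrightarrow> sat A \<iota> \<psi>"
  unfolding sat_seq_def by blast

lemma soundness:
  assumes thy: "is_theory Ops ar Cs X \<Lambda>" and arity: "\<forall>f\<in>Ops. 0 < ar f" and mod: "is_model Ops ar Cs X \<Lambda> A"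
  shows "(\<Gamma>, \<phi>) \<in> deriv Ops ar Cs X \<Lambda> \<Longrightarrow> sat_seq X A \<Gamma> \<phi>"
proof (induction rule: deriv.induct[split_format (complete)])
  case (Ax \<Gamma> \<phi>)
  have "\<forall>p\<in>\<Lambda>. sat_seq X A (fst p) (snd p)" using mod unfolding is_model_def by auto
  then show ?case using Ax by (metis fst_conv snd_conv)
next
  case (Cut \<Gamma> \<Phi> \<psi>)
  show ?case unfolding sat_seq_def
  proof (intro allI impI)
    fix \<iota> assume i: "\<iota> ` X \<subseteq> carrier A" and g: "\<forall>\<phi>\<in>\<Gamma>. sat A \<iota> \<phi>"
    have "\<forall>\<phi>\<in>\<Phi>. sat A \<iota> \<phi>"
    proof
      fix \<phi> assume "\<phi> \<in> \<Phi>"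
      then have "sat_seq X A \<Gamma> \<phi>" using Cut.IH(1) by blast
      then show "sat A \<iota> \<phi>" using i g by (rule sat_seqD)
    qed
    then show "sat A \<iota> \<psi>" using Cut.IH(2) i sat_seqD by blast
  qed
next
  case (Sub \<Gamma> \<psi> \<sigma>)
  show ?case unfolding sat_seq_def
  proof (intro allI impI)
    fix \<iota> assume i: "\<iota> ` X \<subseteq> carrier A" and g: "\<forall>\<phi>\<in>fsubst \<sigma> ` \<Gamma>. sat A \<iota> \<phi>"
    have alg: "is_alg Ops ar Cs A" using mod by (simp add: is_model_def)
    have i': "(eval A \<iota> \<circ> \<sigma>) ` X \<subseteq> carrier A"
      using Sub.hyps(2) eval_carrier[OF alg i] by auto
    have g': "\<forall>\<phi>\<in>\<Gamma>. sat A (eval A \<iota> \<circ> \<sigma>) \<phi>" using g by (simp add: sat_fsubst)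
    have "sat A (eval A \<iota> \<circ> \<sigma>) \<psi>" using Sub.IH i' g' by (rule sat_seqD)
    then show "sat A \<iota> (fsubst \<sigma> \<psi>)" by (simp add: sat_fsubst)
  qed
next
  case (Cong f ts ss \<Gamma>)
  show ?case unfolding sat_seq_def
  proof (intro allI impI)
    fix \<iota> assume i: "\<iota> ` X \<subseteq> carrier A" and g: "\<forall>\<phi>\<in>\<Gamma>. sat A \<iota> \<phi>"
    have "\<forall>j<ar f. eval A \<iota> (ts ! j) = eval A \<iota> (ss ! j)"
    proof (intro allI impI)
      fix j assume "j < ar f"
      then have "sat_seq X A \<Gamma> (Eqn (ts ! j) (ss ! j))" using Cong.IH by blast
      then have "sat A \<iota> (Eqn (ts ! j) (ss ! j))" using i g by (rule sat_seqD)
      then show "eval A \<iota> (ts ! j) = eval A \<iota> (ss ! j)" by simp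
    qed
    then have "map (eval A \<iota>) ts = map (eval A \<iota>) ss"
      using Cong.hyps by (auto intro: nth_equalityI)
    then show "sat A \<iota> (Eqn (App f ts) (App f ss))" by simp
  qed
next
  case (Exp f ts ls \<Gamma>)
  show ?case unfolding sat_seq_def
  proof (intro allI impI)
    fix \<iota> assume i: "\<iota> ` X \<subseteq> carrier A" and g: "\<forall>\<phi>\<in>\<Gamma>. sat A \<iota> \<phi>"
    have le: "\<forall>j<ar f. ls ! j \<le> mem A (eval A \<iota> (ts ! j))"
    proof (intro allI impI)
      fix j assume "j < ar f"
      then have "sat_seq X A \<Gamma> (Mem (ls ! j) (ts ! j))" using Exp.IH by blast
      then have "sat A \<iota> (Mem (ls ! j) (ts ! j))" using i g by (rule sat_seqD)
      then show "ls ! j \<le> mem A (eval A \<iota> (ts ! j))" by simp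
    qed
    have tt: "\<forall>j<ar f. ts ! j \<in> terms Ops ar Cs X"
      using Exp.IH deriv_wf[OF thy arity] by fastforce
    have alg: "is_alg Ops ar Cs A" using mod by (simp add: is_model_def)
    let ?as = "map (eval A \<iota>) ts"
    have sub: "set ?as \<subseteq> carrier A"
      using tt eval_carrier[OF alg i] Exp.hyps(2) by (auto simp: in_set_conv_nth)
    have "Inf (set ls) \<le> Inf (mem A ` set ?as)"
    proof (rule Inf_greatest)
      fix y assume "y \<in> mem A ` set ?as"
      then obtain j where j: "j < ar f" "y = mem A (eval A \<iota> (ts ! j))"
        using Exp.hyps(2) by (auto simp: in_set_conv_nth)
      have "Inf (set ls) \<le> ls ! j" using j Exp.hyps(3) by (auto intro: Inf_lower)
      also have "\<dots> \<le> y" using le j by auto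
      finally show "Inf (set ls) \<le> y" .
    qed
    also have "\<dots> \<le> mem A (opr A f ?as)"
    proof -
      have "length ?as = ar f \<and> set ?as \<subseteq> carrier A" using Exp.hyps(2) sub by simp
      then show ?thesis using alg Exp.hyps(1) unfolding is_alg_def by blast
    qed
    finally show "sat A \<iota> (Mem (Inf (set ls)) (App f ts))" by simp
  qed
next
  case (Sup \<Gamma> t S)
  show ?case unfolding sat_seq_def
  proof (intro allI impI)
    fix \<iota> assume i: "\<iota> ` X \<subseteq> carrier A" and g: "\<forall>\<phi>\<in>\<Gamma>. sat A \<iota> \<phi>"
    have "\<forall>l\<in>S. l \<le> mem A (eval A \<iota> t)"
    proof
      fix l assume "l \<in> S"
      then have "sat_seq X A \<Gamma> (Mem l t)" using Sup.IH by blast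
      then have "sat A \<iota> (Mem l t)" using i g by (rule sat_seqD)
      then show "l \<le> mem A (eval A \<iota> t)" by simp
    qed
    then show "sat A \<iota> (Mem (Sup S) t)" by (simp add: Sup_least)
  qed
next
  case (Mon \<Gamma> l t l')
  show ?case unfolding sat_seq_def
  proof (intro allI impI)
    fix \<iota> assume i: "\<iota> ` X \<subseteq> carrier A" and g: "\<forall>\<phi>\<in>\<Gamma>. sat A \<iota> \<phi>"
    have "sat A \<iota> (Mem l t)" using Mon.IH i g by (rule sat_seqD)
    then show "sat A \<iota> (Mem (inf l l') t)" by (simp add: le_infI1)
  qed
next
  case (A \<Gamma> \<phi>) then show ?case unfolding sat_seq_def by blast
next
  case (Weak \<Gamma> \<phi> \<Delta>) then show ?case unfolding sat_seq_def by blast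
next
  case (Refl \<Gamma> s) then show ?case unfolding sat_seq_def by simp
next
  case (Sym \<Gamma> s t)
  show ?case unfolding sat_seq_def
  proof (intro allI impI)
    fix \<iota> assume i: "\<iota> ` X \<subseteq> carrier A" and g: "\<forall>\<phi>\<in>\<Gamma>. sat A \<iota> \<phi>"
    have "sat A \<iota> (Eqn s t)" using Sym.IH i g by (rule sat_seqD)
    then show "sat A \<iota> (Eqn t s)" by simp
  qed
next
  case (Trans \<Gamma> s t u)
  show ?case unfolding sat_seq_def
  proof (intro allI impI)
    fix \<iota> assume i: "\<iota> ` X \<subseteq> carrier A" and g: "\<forall>\<phi>\<in>\<Gamma>. sat A \<iota> \<phi>"
    have "sat A \<iota> (Eqn s t)" using Trans.IH(1) i g by (rule sat_seqD)
    moreover have "sat A \<iota> (Eqn t u)" using Trans.IH(2) i g by (rule sat_seqD)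
    ultimately show "sat A \<iota> (Eqn s u)" by simp
  qed
next
  case (Inf \<Gamma> t) then show ?case unfolding sat_seq_def by simp
next
  case (Fun \<Gamma> t s l)
  show ?case unfolding sat_seq_def
  proof (intro allI impI)
    fix \<iota> assume i: "\<iota> ` X \<subseteq> carrier A" and g: "\<forall>\<phi>\<in>\<Gamma>. sat A \<iota> \<phi>"
    have "sat A \<iota> (Eqn t s)" using Fun.IH(1) i g by (rule sat_seqD)
    moreover have "sat A \<iota> (Mem l t)" using Fun.IH(2) i g by (rule sat_seqD)
    ultimately show "sat A \<iota> (Mem l s)" by simp
  qed
qed


context
  fixes Ops :: "'o set" and ar :: "'o \<Rightarrow> nat" and Cs :: "'c set" and X :: "'x set"
    and \<Lambda> :: "(('o,'c,'x,'h::complete_lattice) fml set \<times> ('o,'c,'x,'h) fml) set"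
  assumes thy: "is_theory Ops ar Cs X \<Lambda>" and arity: "\<forall>f\<in>Ops. 0 < ar f"
begin

abbreviation PV :: "('o,'c,'x,'h) fml \<Rightarrow> bool" where "PV \<phi> \<equiv> provable Ops ar Cs X \<Lambda> \<phi>"

definition tcls :: "('o,'c,'x) trm \<Rightarrow> ('o,'c,'x) trm set" where
  "tcls t = {s. PV (Eqn t s)}"

definition rep :: "('o,'c,'x) trm set \<Rightarrow> ('o,'c,'x) trm" where
  "rep A = (SOME t. t \<in> A)"

definition TA :: "(('o,'c,'x) trm set, 'h, 'o, 'c) falg" where
  "TA = \<lparr>carrier = tcls ` terms Ops ar Cs X,
         mem = (\<lambda>A. Sup {l. \<exists>t\<in>A. PV (Mem l t)}),
         opr = (\<lambda>f As. tcls (App f (map rep As))),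
         cst = (\<lambda>c. tcls (Cst c))\<rparr>"

lemma P_wf: "PV (Eqn s t) \<Longrightarrow> s \<in> terms Ops ar Cs X \<and> t \<in> terms Ops ar Cs X"
  using deriv_wf[OF thy arity] unfolding provable_def by fastforce

lemma P_Mem_wf: "PV (Mem l t) \<Longrightarrow> t \<in> terms Ops ar Cs X"
  using deriv_wf[OF thy arity] unfolding provable_def by fastforce

lemma P_refl: "t \<in> terms Ops ar Cs X \<Longrightarrow> PV (Eqn t t)"
  unfolding provable_def by (rule deriv.Refl) auto

lemma P_sym: "PV (Eqn s t) \<Longrightarrow> PV (Eqn t s)"
  unfolding provable_def by (rule deriv.Sym)

lemma P_trans: "PV (Eqn s t) \<Longrightarrow> PV (Eqn t u) \<Longrightarrow> PV (Eqn s u)"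
  unfolding provable_def by (rule deriv.Trans)

lemma P_Fun: "PV (Eqn t s) \<Longrightarrow> PV (Mem l t) \<Longrightarrow> PV (Mem l s)"
  unfolding provable_def by (rule deriv.Fun)

lemma cls_self: "t \<in> terms Ops ar Cs X \<Longrightarrow> t \<in> tcls t"
  unfolding tcls_def using P_refl by auto

lemma cls_eq: "s \<in> terms Ops ar Cs X \<Longrightarrow> t \<in> terms Ops ar Cs X \<Longrightarrow> tcls s = tcls t \<longleftrightarrow> PV (Eqn s t)"
proof
  assume "s \<in> terms Ops ar Cs X" "t \<in> terms Ops ar Cs X" "tcls s = tcls t"
  then have "t \<in> tcls s" using cls_self by auto
  then show "PV (Eqn s t)" unfolding tcls_def by simp
next
  assume "PV (Eqn s t)"
  then show "tcls s = tcls t" unfolding tcls_def using P_sym P_trans by blast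
qed

lemma rep_cls: assumes "t \<in> terms Ops ar Cs X"
  shows "rep (tcls t) \<in> terms Ops ar Cs X \<and> PV (Eqn t (rep (tcls t))) \<and> tcls (rep (tcls t)) = tcls t"
proof -
  have "rep (tcls t) \<in> tcls t" unfolding rep_def using cls_self[OF assms] by (rule someI)
  then have 1: "PV (Eqn t (rep (tcls t)))" unfolding tcls_def by simp
  then have 2: "rep (tcls t) \<in> terms Ops ar Cs X" using P_wf by blast
  have "tcls (rep (tcls t)) = tcls t" using cls_eq[OF 2 assms] 1 P_sym by blast
  then show ?thesis using 1 2 by blast
qed

lemma P_Sup: "t \<in> terms Ops ar Cs X \<Longrightarrow> PV (Mem (Sup {l. PV (Mem l t)}) t)"
  unfolding provable_def by (rule deriv.Sup) auto

lemma mem_cls: assumes "t \<in> terms Ops ar Cs X"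
  shows "mem TA (tcls t) = Sup {l. PV (Mem l t)}"
proof -
  have "{l. \<exists>s\<in>tcls t. PV (Mem l s)} = {l. PV (Mem l t)}"
  proof
    show "{l. \<exists>s\<in>tcls t. PV (Mem l s)} \<subseteq> {l. PV (Mem l t)}"
      unfolding tcls_def using P_sym P_Fun by blast
    show "{l. PV (Mem l t)} \<subseteq> {l. \<exists>s\<in>tcls t. PV (Mem l s)}"
      using cls_self[OF assms] by blast
  qed
  then show ?thesis unfolding TA_def by simp
qed

lemma mem_le: assumes "t \<in> terms Ops ar Cs X"
  shows "l \<le> mem TA (tcls t) \<longleftrightarrow> PV (Mem l t)"
proof
  assume "PV (Mem l t)"
  then show "l \<le> mem TA (tcls t)" unfolding mem_cls[OF assms] by (simp add: Sup_upper)
next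
  assume le: "l \<le> mem TA (tcls t)"
  have "PV (Mem (inf (Sup {l. PV (Mem l t)}) l) t)"
    using P_Sup[OF assms] unfolding provable_def by (rule deriv.Mon)
  moreover have "inf (Sup {l. PV (Mem l t)}) l = l"
    using le unfolding mem_cls[OF assms] by (simp add: inf_absorb2)
  ultimately show "PV (Mem l t)" by simp
qed

lemma opr_cls:
  assumes f: "f \<in> Ops" and len: "length ts = ar f" and ts: "set ts \<subseteq> terms Ops ar Cs X"
  shows "opr TA f (map tcls ts) = tcls (App f ts)"
proof -
  let ?rs = "map rep (map tcls ts)"
  have eq: "\<forall>i<ar f. ({}, Eqn (ts ! i) (?rs ! i)) \<in> deriv Ops ar Cs X \<Lambda>"
  proof (intro allI impI)
    fix i assume "i < ar f"
    then have "ts ! i \<in> terms Ops ar Cs X" using ts len by auto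
    then have "PV (Eqn (ts ! i) (rep (tcls (ts ! i))))" using rep_cls by blast
    then show "({}, Eqn (ts ! i) (?rs ! i)) \<in> deriv Ops ar Cs X \<Lambda>"
      using \<open>i < ar f\<close> len unfolding provable_def by simp
  qed
  have "PV (Eqn (App f ts) (App f ?rs))"
    unfolding provable_def using f len eq by (intro deriv.Cong) auto
  moreover have "App f ts \<in> terms Ops ar Cs X" using f len ts by (intro terms.app) auto
  moreover have "App f ?rs \<in> terms Ops ar Cs X" using calculation(1) P_wf by blast
  ultimately have "tcls (App f ?rs) = tcls (App f ts)" using cls_eq P_sym by blast
  then show ?thesis unfolding TA_def by simp
qed

lemma carrier_TA: "carrier TA = tcls ` terms Ops ar Cs X"
  unfolding TA_def by simp

lemma cst_TA: "cst TA c = tcls (Cst c)"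
  unfolding TA_def by simp

lemma carrier_rep: assumes "A \<in> carrier TA"
  shows "rep A \<in> terms Ops ar Cs X \<and> tcls (rep A) = A"
proof -
  obtain t where t: "t \<in> terms Ops ar Cs X" "A = tcls t" using assms carrier_TA by auto
  then show ?thesis using rep_cls[OF t(1)] by simp
qed

lemma TA_alg: "is_alg Ops ar Cs TA"
  unfolding is_alg_def
proof (intro conjI ballI allI impI)
  fix c assume "c \<in> Cs"
  then show "cst TA c \<in> carrier TA" unfolding carrier_TA cst_TA by (auto intro: terms.cst)
next
  fix f As assume f: "f \<in> Ops" and As: "length As = ar f \<and> set As \<subseteq> carrier TA"
  let ?ts = "map rep As"
  have tsT: "set ?ts \<subseteq> terms Ops ar Cs X" using As carrier_rep by auto
  have AsE: "As = map tcls ?ts"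
    using As carrier_rep by (auto intro!: map_idI[symmetric])
  have len: "length ?ts = ar f" using As by simp
  have op: "opr TA f As = tcls (App f ?ts)" using opr_cls[OF f len tsT] AsE by simp
  have appT: "App f ?ts \<in> terms Ops ar Cs X" using f len tsT by (intro terms.app) auto
  then show "opr TA f As \<in> carrier TA" unfolding op carrier_TA by simp
  let ?ls = "map (\<lambda>t. Sup {l. PV (Mem l t)}) ?ts"
  have lsP: "\<forall>i<ar f. ({}, Mem (?ls ! i) (?ts ! i)) \<in> deriv Ops ar Cs X \<Lambda>"
  proof (intro allI impI)
    fix i assume i: "i < ar f"
    then have "?ts ! i \<in> terms Ops ar Cs X" using tsT len by (metis nth_mem subsetD)
    then have "PV (Mem (Sup {l. PV (Mem l (?ts ! i))}) (?ts ! i))" by (rule P_Sup)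
    then show "({}, Mem (?ls ! i) (?ts ! i)) \<in> deriv Ops ar Cs X \<Lambda>"
      using i len unfolding provable_def by simp
  qed
  have "PV (Mem (Inf (set ?ls)) (App f ?ts))"
    using f len lsP unfolding provable_def by (intro deriv.Exp) auto
  then have "Inf (set ?ls) \<le> mem TA (tcls (App f ?ts))" using mem_le[OF appT] by blast
  moreover have "mem TA ` set As = set ?ls"
  proof -
    have "mem TA ` set As = mem TA ` tcls ` set ?ts" using AsE by (metis set_map)
    also have "\<dots> = (\<lambda>t. Sup {l. PV (Mem l t)}) ` set ?ts"
      unfolding image_image using tsT mem_cls by (intro image_cong) auto
    finally show ?thesis by (metis set_map)
  qed
  ultimately show "Inf (mem TA ` set As) \<le> mem TA (opr TA f As)" unfolding op by simp
qed

lemma eval_TA: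
  assumes i: "\<iota> ` X \<subseteq> carrier TA"
  shows "t \<in> terms Ops ar Cs X \<Longrightarrow> eval TA \<iota> t = tcls (tsubst (\<lambda>x. rep (\<iota> x)) t)"
proof (induction rule: terms.induct)
  case (var x)
  then show ?case using carrier_rep i by auto
next
  case (cst c)
  then show ?case by (simp add: cst_TA)
next
  case (app f ts)
  let ?\<sigma> = "\<lambda>x. rep (\<iota> x)"
  have sT: "\<forall>x\<in>X. ?\<sigma> x \<in> terms Ops ar Cs X" using i carrier_rep by auto
  have m: "map (eval TA \<iota>) ts = map tcls (map (tsubst ?\<sigma>) ts)" using app.IH by auto
  have "set (map (tsubst ?\<sigma>) ts) \<subseteq> terms Ops ar Cs X"
    using app.IH sT by (auto intro: tsubst_terms)
  then have "opr TA f (map tcls (map (tsubst ?\<sigma>) ts)) = tcls (App f (map (tsubst ?\<sigma>) ts))"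
    using app.hyps(2) by (intro opr_cls[OF app.hyps(1)]) auto
  then have "opr TA f (map (eval TA \<iota>) ts) = tcls (App f (map (tsubst ?\<sigma>) ts))"
    by (simp only: m)
  then show ?case by simp
qed

lemma TA_model: "is_model Ops ar Cs X \<Lambda> TA"
  unfolding is_model_def
proof (intro conjI TA_alg ballI)
  fix p assume p: "p \<in> \<Lambda>"
  obtain \<Gamma> \<psi> where pe: "p = (\<Gamma>, \<psi>)" by fastforce
  have wf: "\<Gamma> \<subseteq> fmls Ops ar Cs X" "\<psi> \<in> fmls Ops ar Cs X"
    using thy p pe unfolding is_theory_def by auto
  have "sat_seq X TA \<Gamma> \<psi>" unfolding sat_seq_def
  proof (intro allI impI)
    fix \<iota> assume i: "\<iota> ` X \<subseteq> carrier TA" and g: "\<forall>\<phi>\<in>\<Gamma>. sat TA \<iota> \<phi>"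
    let ?\<sigma> = "\<lambda>x. rep (\<iota> x)"
    have sT: "\<forall>x\<in>X. ?\<sigma> x \<in> terms Ops ar Cs X" using i carrier_rep by auto
    have satP: "sat TA \<iota> \<phi> \<longleftrightarrow> PV (fsubst ?\<sigma> \<phi>)" if "\<phi> \<in> fmls Ops ar Cs X" for \<phi>
    proof (cases \<phi>)
      case (Eqn s t)
      then have st: "s \<in> terms Ops ar Cs X" "t \<in> terms Ops ar Cs X" using that by auto
      show ?thesis using Eqn eval_TA[OF i st(1)] eval_TA[OF i st(2)]
          cls_eq[OF tsubst_terms[OF st(1) sT] tsubst_terms[OF st(2) sT]] by simp
    next
      case (Mem l t)
      then have st: "t \<in> terms Ops ar Cs X" using that by auto
      show ?thesis using Mem eval_TA[OF i st] mem_le[OF tsubst_terms[OF st sT]] by simp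
    qed
    have "\<forall>\<phi>'\<in>fsubst ?\<sigma> ` \<Gamma>. ({}, \<phi>') \<in> deriv Ops ar Cs X \<Lambda>"
      using g satP wf(1) unfolding provable_def by blast
    moreover have "(fsubst ?\<sigma> ` \<Gamma>, fsubst ?\<sigma> \<psi>) \<in> deriv Ops ar Cs X \<Lambda>"
      using p pe sT by (intro deriv.Sub deriv.Ax) auto
    ultimately have "({}, fsubst ?\<sigma> \<psi>) \<in> deriv Ops ar Cs X \<Lambda>"
      by (intro deriv.Cut[of "{}"]) auto
    then show "sat TA \<iota> \<psi>" using satP[OF wf(2)] unfolding provable_def by simp
  qed
  then show "case p of (\<Gamma>, \<psi>) \<Rightarrow> sat_seq X TA \<Gamma> \<psi>" using pe by simp
qed

lemma TA_nabla: "nabla_arrow X TA (\<lambda>x. tcls (Var x))"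
  unfolding nabla_arrow_def carrier_TA by (auto intro: terms.var)

end



theorem lemma37:
  fixes Ops :: "'o set" and ar :: "'o \<Rightarrow> nat" and Cs :: "'c set" and X :: "'x set"
    and \<Lambda> :: "(('o,'c,'x,'h::complete_lattice) fml set \<times> ('o,'c,'x,'h) fml) set"
    and F :: "('a,'h,'o,'c) falg" and \<eta> :: "'x \<Rightarrow> 'a"
  assumes frame: "is_frame TYPE('h)"
    and arity: "\<forall>f\<in>Ops. 0 < ar f"
    and thy: "is_theory Ops ar Cs X \<Lambda>"
    and univ_own: "universal_arrow Ops ar Cs X \<Lambda> F \<eta> TYPE('a)"
    and univ_big: "universal_arrow Ops ar Cs X \<Lambda> F \<eta> TYPE(('o,'c,'x) trm set)"
  shows "\<forall>\<phi>\<in>fmls Ops ar Cs X. sat F \<eta> \<phi> \<longleftrightarrow> provable Ops ar Cs X \<Lambda> \<phi>"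
proof -
  let ?B = "TA Ops ar Cs X \<Lambda>"
  let ?g = "\<lambda>x. tcls Ops ar Cs X \<Lambda> (Var x)"
  have modF: "is_model Ops ar Cs X \<Lambda> F" and nab: "nabla_arrow X F \<eta>"
    using univ_big unfolding universal_arrow_def by blast+
  have all: "\<forall>(B::(('o,'c,'x) trm set,'h,'o,'c) falg) g. is_model Ops ar Cs X \<Lambda> B \<and> nabla_arrow X B g \<longrightarrow>
        (\<exists>h. alg_hom Ops ar Cs F B h \<and> (\<forall>x\<in>X. h (\<eta> x) = g x))"
    using univ_big unfolding universal_arrow_def by blast
  have "\<exists>h. alg_hom Ops ar Cs F ?B h \<and> (\<forall>x\<in>X. h (\<eta> x) = ?g x)"
    using all TA_model[OF thy arity] TA_nabla[OF thy arity] by blast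
  then obtain h where hom: "alg_hom Ops ar Cs F ?B h" and hx: "\<forall>x\<in>X. h (\<eta> x) = ?g x" by blast
  have algF: "is_alg Ops ar Cs F" using modF by (simp add: is_model_def)
  have etaX: "\<eta> ` X \<subseteq> carrier F" using nab unfolding nabla_arrow_def by auto
  have hev: "h (eval F \<eta> t) = tcls Ops ar Cs X \<Lambda> t" if "t \<in> terms Ops ar Cs X" for t
    using that
  proof (induction rule: terms.induct)
    case (var x)
    then show ?case using hx by simp
  next
    case (cst c)
    then show ?case using hom unfolding alg_hom_def by (simp add: cst_TA[OF thy arity])
  next
    case (app f ts)
    have sub: "set (map (eval F \<eta>) ts) \<subseteq> carrier F"
      using app.IH eval_carrier[OF algF etaX] by auto
    have "h (opr F f (map (eval F \<eta>) ts)) = opr ?B f (map h (map (eval F \<eta>) ts))"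
      using hom app.hyps(1,2) sub unfolding alg_hom_def by simp
    also have "map h (map (eval F \<eta>) ts) = map (tcls Ops ar Cs X \<Lambda>) ts"
      using app.IH by auto
    also have "opr ?B f (map (tcls Ops ar Cs X \<Lambda>) ts) = tcls Ops ar Cs X \<Lambda> (App f ts)"
      using app.IH app.hyps by (intro opr_cls[OF thy arity]) auto
    finally show ?case by simp
  qed
  show ?thesis
  proof
    fix \<phi> :: "('o,'c,'x,'h) fml" assume \<phi>: "\<phi> \<in> fmls Ops ar Cs X"
    show "sat F \<eta> \<phi> \<longleftrightarrow> provable Ops ar Cs X \<Lambda> \<phi>"
    proof
      assume "provable Ops ar Cs X \<Lambda> \<phi>"
      then have "sat_seq X F {} \<phi>" unfolding provable_def by (rule soundness[OF thy arity modF])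
      then show "sat F \<eta> \<phi>" using etaX by (rule sat_seqD) simp
    next
      assume sat: "sat F \<eta> \<phi>"
      show "provable Ops ar Cs X \<Lambda> \<phi>"
      proof (cases \<phi>)
        case (Eqn s t)
        then have st: "s \<in> terms Ops ar Cs X" "t \<in> terms Ops ar Cs X" using \<phi> by auto
        have "h (eval F \<eta> s) = h (eval F \<eta> t)" using sat Eqn by simp
        then have "tcls Ops ar Cs X \<Lambda> s = tcls Ops ar Cs X \<Lambda> t" using hev st by simp
        then show ?thesis using cls_eq[OF thy arity st] Eqn by simp
      next
        case (Mem l t)
        then have st: "t \<in> terms Ops ar Cs X" using \<phi> by auto
        have ec: "eval F \<eta> t \<in> carrier F" using eval_carrier[OF algF etaX st] .
        have "l \<le> mem F (eval F \<eta> t)" using sat Mem by simp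
        also have "\<dots> \<le> mem ?B (h (eval F \<eta> t))" using hom ec unfolding alg_hom_def by blast
        also have "\<dots> = mem ?B (tcls Ops ar Cs X \<Lambda> t)" using hev st by simp
        finally show ?thesis using mem_le[OF thy arity st] Mem by simp
      qed
    qed
  qed
qed

end
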